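(* Let $N=\{1,\dots,n\}$, $n\ge2$, be a parallel-link network with unit demand and affine latencies $\ell_i(x_i)=a_ix_i+b_i$, $a_i>0$, $b_i\ge0$, and suppose $x_i(0)>0$ for all $i\in N$. Let $c\in\mathbb{R}_+$. For $t\in\mathbb{R}^N_+$ and a flow $x$, we have that $t\in\mathcal{T}(c)$ and $x=x(t)$ if and only if there exists $K\in\mathbb{R}$ such that (1) $a_ix_i+b_i+t_i=K$ for all $i\in N$; (2) $\sum_{i\in N}x_i=1$; (3) $t_i=\min\left\{\left(a_i+\frac{1}{\sum_{j\neq i}1/a_j}\right)x_i,\;c\right\}$ for all $i\in N$; (4) $x_i>0$ for all $i\in N$.
   Context: Parallel links $N$ from source to destination, one unit of flow; a flow is $x\in\mathbb{R}^N_+$ with $\sum_ix_i=1$. For tolls $t\in\mathbb{R}^N_+$, $x(t)$ denotes the unique Wardrop equilibrium for $t$: for all $i,j$ with $x_i>0$, $\ell_i(x_i)+t_i\le \ell_j(x_j)+t_j$; $x(0)$ is the untolled one. Profit $\Pi_i(t)=t_ix_i(t)$. $\mathcal{T}(c)$ is the set of $c$-capped subgame perfect Nash equilibria: toll vectors $t$ with $0\le t_i\le c$ for all $i$ such that for every $i$ and every $t'_i\in[0,c]$, $\Pi_i(t_i,t_{-i})\ge\Pi_i(t'_i,t_{-i})$ (flow recomputed as the Wardrop equilibrium). *)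

theory Defs
  imports Complex_Main
begin

text \<open>Flows and tolls are functions nat => real; only their values on {1..n} matter
  (flows are normalised to 0 outside N so that the equilibrium is unique as a function).\<close>

definition is_flow :: "nat \<Rightarrow> (nat \<Rightarrow> real) \<Rightarrow> bool" where
  "is_flow n x \<longleftrightarrow> (\<forall>i\<in>{1..n}. 0 \<le> x i) \<and> (\<Sum>i\<in>{1..n}. x i) = 1"

definition wardrop ::
  "nat \<Rightarrow> (nat \<Rightarrow> real) \<Rightarrow> (nat \<Rightarrow> real) \<Rightarrow> (nat \<Rightarrow> real) \<Rightarrow> (nat \<Rightarrow> real) \<Rightarrow> bool" where
  "wardrop n a b t x \<longleftrightarrow> is_flow n x \<and> (\<forall>i. i \<notin> {1..n} \<longrightarrow> x i = 0) \<and>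
     (\<forall>i\<in>{1..n}. \<forall>j\<in>{1..n}. x i > 0 \<longrightarrow>
        a i * x i + b i + t i \<le> a j * x j + b j + t j)"

definition eqflow ::
  "nat \<Rightarrow> (nat \<Rightarrow> real) \<Rightarrow> (nat \<Rightarrow> real) \<Rightarrow> (nat \<Rightarrow> real) \<Rightarrow> (nat \<Rightarrow> real)" where
  "eqflow n a b t = (THE x. wardrop n a b t x)"

definition profit ::
  "nat \<Rightarrow> (nat \<Rightarrow> real) \<Rightarrow> (nat \<Rightarrow> real) \<Rightarrow> (nat \<Rightarrow> real) \<Rightarrow> nat \<Rightarrow> real" where
  "profit n a b t i = t i * eqflow n a b t i"

definition capped_SPNE ::
  "nat \<Rightarrow> (nat \<Rightarrow> real) \<Rightarrow> (nat \<Rightarrow> real) \<Rightarrow> real \<Rightarrow> (nat \<Rightarrow> real) set" where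
  "capped_SPNE n a b c = {t. (\<forall>i\<in>{1..n}. 0 \<le> t i \<and> t i \<le> c) \<and>
      (\<forall>i\<in>{1..n}. \<forall>t'\<in>{0..c}. profit n a b t i \<ge> profit n a b (t(i := t')) i)}"

end

theory Submission
  imports Defs
begin


lemma sum_eq_le:
  fixes f g :: "nat \<Rightarrow> real"
  assumes "finite A" "\<forall>i\<in>A. f i \<le> g i" "sum f A = sum g A"
  shows "\<forall>i\<in>A. f i = g i"
proof -
  have "(\<Sum>i\<in>A. g i - f i) = 0" using assms(3) by (simp add: sum_subtractf)
  then have "\<forall>i\<in>A. g i - f i = 0" using assms(1,2) by (subst (asm) sum_nonneg_eq_0_iff) auto
  thus ?thesis by auto
qed

lemma wardrop_level:
  assumes a: "\<forall>i\<in>{1..n}. a i > 0" and w: "wardrop n a b t x"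
  shows "\<exists>K. \<forall>i\<in>{1..n}. x i = max 0 ((K - b i - t i)/a i)"
proof -
  from w have f: "is_flow n x" and cond: "\<forall>i\<in>{1..n}. \<forall>j\<in>{1..n}. x i > 0 \<longrightarrow> a i * x i + b i + t i \<le> a j * x j + b j + t j"
    by (auto simp: wardrop_def)
  have nn: "\<forall>i\<in>{1..n}. 0 \<le> x i" and s: "(\<Sum>i\<in>{1..n}. x i) = 1" using f by (auto simp: is_flow_def)
  have "\<exists>i0\<in>{1..n}. x i0 > 0"
  proof (rule ccontr)
    assume "\<not> ?thesis"
    then have "\<forall>i\<in>{1..n}. x i \<le> 0" by auto
    then have "(\<Sum>i\<in>{1..n}. x i) \<le> 0" by (intro sum_nonpos) auto
    with s show False by simp
  qed
  then obtain i0 where i0: "i0 \<in> {1..n}" "x i0 > 0" by blast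
  define K where "K = a i0 * x i0 + b i0 + t i0"
  have "x i = max 0 ((K - b i - t i)/a i)" if i: "i\<in>{1..n}" for i
  proof (cases "x i > 0")
    case True
    have "a i * x i + b i + t i \<le> K" using cond i i0 True unfolding K_def by blast
    moreover have "K \<le> a i * x i + b i + t i" using cond i i0 unfolding K_def by blast
    ultimately have "a i * x i + b i + t i = K" by linarith
    moreover have "a i > 0" using a i by blast
    ultimately have "x i = (K - b i - t i)/a i" by (auto simp: field_simps)
    then show ?thesis using True by simp
  next
    case False
    then have x0: "x i = 0" using nn i by force
    have "K \<le> a i * x i + b i + t i" using cond i i0 unfolding K_def by blast
    then have "(K - b i - t i)/a i \<le> 0" using x0 a i by (simp add: divide_nonpos_pos)
    then show ?thesis using x0 by simp
  qed
  thus ?thesis by blast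
qed

lemma level_wardrop:
  assumes a: "\<forall>i\<in>{1..n}. a i > 0"
    and l: "\<forall>i\<in>{1..n}. x i = max 0 ((K - b i - t i)/a i)"
    and z: "\<forall>i. i \<notin> {1..n} \<longrightarrow> x i = 0"
    and s: "(\<Sum>i\<in>{1..n}. x i) = 1"
  shows "wardrop n a b t x"
proof -
  have "is_flow n x" using l s by (auto simp: is_flow_def)
  moreover have "a i * x i + b i + t i \<le> a j * x j + b j + t j"
    if i: "i\<in>{1..n}" and j: "j\<in>{1..n}" and p: "x i > 0" for i j
  proof -
    have ai: "a i > 0" using a i by blast
    have "x i = (K - b i - t i)/a i" using l i p by (auto simp: max_def split: if_splits)
    then have e: "a i * x i + b i + t i = K" using ai by (simp add: field_simps)
    have "x j \<ge> (K - b j - t j)/a j" using l j by auto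
    then have "a j * x j \<ge> K - b j - t j" using a j by (auto simp: field_simps)
    thus ?thesis using e by linarith
  qed
  ultimately show ?thesis using z by (auto simp: wardrop_def)
qed

lemma wardrop_exists:
  assumes a: "\<forall>i\<in>{1..n}. a i > 0" and n: "n \<ge> 1"
  shows "\<exists>x. wardrop n a b t x"
proof -
  define f where "f K = (\<Sum>j\<in>{1..n}. max 0 ((K - b j - t j)/a j))" for K
  define L where "L = Min ((\<lambda>j. b j + t j) ` {1..n})"
  define U where "U = b 1 + t 1 + a 1"
  have one: "1 \<in> {1..n}" using n by auto
  have "L \<le> b 1 + t 1" unfolding L_def using one by (intro Min_le) auto
  then have LU: "L \<le> U" unfolding U_def using a one by force
  have "f L = 0" unfolding f_def
  proof (intro sum.neutral ballI)
    fix j assume j: "j \<in> {1..n}"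
    have "L \<le> b j + t j" unfolding L_def using j by (intro Min_le) auto
    then have "(L - b j - t j)/a j \<le> 0" using a j by (simp add: divide_nonpos_pos)
    thus "max 0 ((L - b j - t j)/a j) = 0" by simp
  qed
  have "f U \<ge> 1"
  proof -
    have "f U = max 0 ((U - b 1 - t 1)/a 1) + (\<Sum>j\<in>{1..n}-{1}. max 0 ((U - b j - t j)/a j))"
      unfolding f_def using one sum.remove[of "{1..n}" 1 "\<lambda>j. max 0 ((U - b j - t j)/a j)"] by simp
    moreover have "max 0 ((U - b 1 - t 1)/a 1) = 1" proof -
      have "a 1 > 0" using a one by blast
      thus ?thesis unfolding U_def by simp qed
    moreover have "(\<Sum>j\<in>{1..n}-{1}. max 0 ((U - b j - t j)/a j)) \<ge> 0" by (intro sum_nonneg) auto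
    ultimately show ?thesis by linarith
  qed
  have anz: "\<forall>j\<in>{1..n}. a j \<noteq> 0" using a by force
  have "continuous_on {L..U} f" unfolding f_def using anz by (intro continuous_intros) auto
  then obtain K where K: "f K = 1" using IVT'[of f L 1 U] LU \<open>f L = 0\<close> \<open>f U \<ge> 1\<close> by auto
  define x where "x j = (if j \<in> {1..n} then max 0 ((K - b j - t j)/a j) else 0)" for j
  have "wardrop n a b t x"
    by (rule level_wardrop[OF a, of _ K]) (use K in \<open>auto simp: x_def f_def\<close>)
  thus ?thesis by blast
qed

lemma wardrop_unique:
  assumes a: "\<forall>i\<in>{1..n}. a i > 0" and wx: "wardrop n a b t x" and wy: "wardrop n a b t y"
  shows "x = y"
proof -
  obtain Kx where Kx: "\<forall>i\<in>{1..n}. x i = max 0 ((Kx - b i - t i)/a i)" using wardrop_level[OF a wx] by blast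
  obtain Ky where Ky: "\<forall>i\<in>{1..n}. y i = max 0 ((Ky - b i - t i)/a i)" using wardrop_level[OF a wy] by blast
  have sx: "(\<Sum>i\<in>{1..n}. x i) = 1" and sy: "(\<Sum>i\<in>{1..n}. y i) = 1" using wx wy by (auto simp: wardrop_def is_flow_def)
  have "\<forall>i\<in>{1..n}. x i = y i"
  proof (cases "Kx \<le> Ky")
    case True
    have "\<forall>i\<in>{1..n}. x i \<le> y i"
    proof
      fix i assume i: "i \<in> {1..n}"
      have "(Kx - b i - t i)/a i \<le> (Ky - b i - t i)/a i" using a i True by (intro divide_right_mono) (auto simp: less_imp_le)
      thus "x i \<le> y i" using Kx Ky i by auto
    qed
    thus ?thesis using sum_eq_le[of "{1..n}" x y] sx sy by auto
  next
    case False
    have "\<forall>i\<in>{1..n}. y i \<le> x i"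
    proof
      fix i assume i: "i \<in> {1..n}"
      have "(Ky - b i - t i)/a i \<le> (Kx - b i - t i)/a i" using a i False by (intro divide_right_mono) (auto simp: less_imp_le)
      thus "y i \<le> x i" using Kx Ky i by auto
    qed
    thus ?thesis using sum_eq_le[of "{1..n}" y x] sx sy by auto
  qed
  moreover have "\<forall>i. i \<notin> {1..n} \<longrightarrow> x i = y i" using wx wy by (auto simp: wardrop_def)
  ultimately show ?thesis by (metis ext)
qed

lemma eqflow_eq:
  assumes a: "\<forall>i\<in>{1..n}. a i > 0" and w: "wardrop n a b t x"
  shows "eqflow n a b t = x"
  unfolding eqflow_def using wardrop_unique[OF a] w by (intro the_equality) auto

lemma eqflow_wardrop:
  assumes a: "\<forall>i\<in>{1..n}. a i > 0" and n: "n \<ge> 1"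
  shows "wardrop n a b t (eqflow n a b t)"
  using wardrop_exists[OF a n, of b t] eqflow_eq[OF a] by metis



lemma S_pos:
  fixes n :: nat and a :: "nat \<Rightarrow> real"
  assumes a: "\<forall>i\<in>{1..n}. a i > 0" and n2: "n \<ge> 2" and i: "i \<in> {1..n}"
  shows "(\<Sum>j\<in>{1..n}-{i}. 1/a j) > (0::real)"
proof -
  obtain j where j: "j \<in> {1..n}-{i}"
  proof (cases "i = 1")
    case True then show ?thesis using that[of 2] n2 by auto
  next
    case False then show ?thesis using that[of 1] n2 by auto
  qed
  have ap: "\<And>k. 1 \<le> k \<Longrightarrow> k \<le> n \<Longrightarrow> a k > 0" using a by auto
  show ?thesis using j by (intro sum_pos2[of _ j]) (auto intro: less_imp_le ap simp del: One_nat_def)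
qed

lemma T_split:
  fixes n :: nat and a :: "nat \<Rightarrow> real"
  assumes i: "i \<in> {1..n}"
  shows "(\<Sum>j\<in>{1..n}. 1/a j) = 1/a i + (\<Sum>j\<in>{1..n}-{i}. 1/(a j::real))"
  using i sum.remove[of "{1..n}" i "\<lambda>j. 1/a j"] by simp

lemma tangent:
  assumes a: "\<forall>i\<in>{1..n}. a i > 0" and n2: "n \<ge> 2" and i: "i \<in> {1..n}"
   and X: "\<forall>j\<in>{1..n}. a j * x j + b j + t j = K" and sx: "(\<Sum>j\<in>{1..n}. x j) = 1"
   and wy: "wardrop n a b (t(i:=t')) y" and yi: "y i > 0"
  shows "y i \<le> x i - (t' - t i) / (a i + 1/(\<Sum>j\<in>{1..n}-{i}. 1/a j))"
proof -
  obtain K' where K': "\<forall>j\<in>{1..n}. y j = max 0 ((K' - b j - (t(i:=t')) j)/a j)"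
    using wardrop_level[OF a wy] by blast
  define D where "D = K' - K"
  define d where "d = t' - t i"
  define S where "S = (\<Sum>j\<in>{1..n}-{i}. 1/a j)"
  have Spos: "S > 0" unfolding S_def using S_pos[OF a n2 i] .
  have A: "a i > 0" using a i by blast
  define g where "g j = x j + D / a j - (if j = i then d / a i else 0)" for j
  have ge: "(K' - b j - (t(i:=t')) j)/a j = g j" if j: "j \<in> {1..n}" for j
  proof -
    have aj: "a j > 0" using a j by blast
    have "a j * x j + b j + t j = K" using X j by blast
    then have xj: "x j = (K - b j - t j)/a j" using aj by (simp add: field_simps)
    have ajn: "a j \<noteq> 0" using aj by simp
    show ?thesis unfolding g_def xj D_def d_def using ajn
      by (cases "j = i") (simp_all add: field_simps)
  qed
  have ymax: "\<forall>j\<in>{1..n}. y j = max 0 (g j)" using K' ge by simp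
  have gy: "\<forall>j\<in>{1..n}. g j \<le> y j" using ymax by simp
  have "y i = max 0 (g i)" using ymax i by blast
  then have ygi: "y i = g i" using yi by (auto simp: max_def split: if_splits)
  have sy: "(\<Sum>j\<in>{1..n}. y j) = 1" using wy by (auto simp: wardrop_def is_flow_def)
  have "(\<Sum>j\<in>{1..n}. g j) = (\<Sum>j\<in>{1..n}. x j) + D * (\<Sum>j\<in>{1..n}. 1/a j) - (\<Sum>j\<in>{1..n}. (if j = i then d / a i else 0))"
    unfolding g_def by (simp add: sum.distrib sum_subtractf sum_distrib_left)
  also have "\<dots> = 1 + D * (1/a i + S) - d / a i"
    using i sx T_split[OF i, of a] by (simp add: S_def)
  finally have sg: "(\<Sum>j\<in>{1..n}. g j) = 1 + D * (1/a i + S) - d / a i" .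
  have "(\<Sum>j\<in>{1..n}. g j) \<le> (\<Sum>j\<in>{1..n}. y j)" using gy by (intro sum_mono) auto
  then have "D * (1/a i + S) \<le> d / a i" using sg sy by linarith
  then have "D * (1/a i + S) * a i \<le> d / a i * a i" using A by (intro mult_right_mono) auto
  moreover have "D * (1/a i + S) * a i = D * (1 + a i * S)" using A by (simp add: field_simps)
  moreover have "d / a i * a i = d" using A by simp
  ultimately have key: "D * (1 + a i * S) \<le> d" by simp
  have "(D - d) * (a i * S + 1) \<le> - d * S * a i" using key by (simp add: algebra_simps)
  then have "(D - d) * (a i * S + 1) / (a i * (a i * S + 1)) \<le> - d * S * a i / (a i * (a i * S + 1))"
    using A Spos by (intro divide_right_mono) auto
  moreover have "(D - d) * (a i * S + 1) / (a i * (a i * S + 1)) = (D - d) / a i"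
  proof -
    have "0 < a i * S" using A Spos by simp
    then have "a i * S + 1 \<noteq> 0" by linarith
    thus ?thesis by (rule nonzero_mult_divide_mult_cancel_right)
  qed
  moreover have "- d * S * a i / (a i * (a i * S + 1)) = - (d * S) / (a i * S + 1)"
  proof -
    have "a i \<noteq> 0" using A by simp
    then have "(- (d * S)) * a i / (a i * (a i * S + 1)) = - (d * S) / (a i * S + 1)"
      by (rule nonzero_mult_divide_mult_cancel_right2)
    thus ?thesis by simp
  qed
  ultimately have "(D - d) / a i \<le> - (d * S) / (a i * S + 1)" by simp
  moreover have "d / (a i + 1/S) = d * S / (a i * S + 1)" using Spos by (simp add: field_simps)
  moreover have "g i = x i + (D - d) / a i" unfolding g_def by (simp add: diff_divide_distrib)
  ultimately show ?thesis using ygi unfolding S_def[symmetric] d_def[symmetric] by simp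
qed



lemma exists_pos:
  fixes E :: "nat \<Rightarrow> real"
  assumes "(\<Sum>j\<in>{1..n}. E j) = 1"
  shows "\<exists>j\<in>{1..n}. E j > 0"
proof (rule ccontr)
  assume "\<not> ?thesis"
  then have "\<forall>i\<in>{1..n}. E i \<le> 0" by auto
  then have "(\<Sum>i\<in>{1..n}. E i) \<le> 0" by (intro sum_nonpos) auto
  with assms show False by simp
qed

lemma ev_pos:
  fixes x k :: "nat \<Rightarrow> real"
  assumes "finite N" "\<forall>j\<in>N. 0 < x j"
  shows "eventually (\<lambda>d. \<forall>j\<in>N. 0 < x j + d * k j) (at (0::real) within s)"
proof -
  have "\<forall>j\<in>N. eventually (\<lambda>d. 0 < x j + d * k j) (at 0 within s)"
  proof
    fix j assume j: "j \<in> N"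
    have "((\<lambda>d. x j + d * k j) \<longlongrightarrow> x j + 0 * k j) (at 0 within s)" by (intro tendsto_add tendsto_const tendsto_mult tendsto_ident_at)
    then have "((\<lambda>d. x j + d * k j) \<longlongrightarrow> x j) (at 0 within s)" by simp
    then show "eventually (\<lambda>d. 0 < x j + d * k j) (at 0 within s)"
      using assms j by (intro order_tendstoD(1)) auto
  qed
  then show ?thesis by (rule eventually_ball_finite[OF assms(1)])
qed

lemma alg1:
  fixes A q S :: real
  assumes A: "A \<noteq> 0" and q: "q \<noteq> 0" and qd: "q = 1 + A * S"
  shows "1/q/A - 1/A = - (S / q)"
proof -
  have "1/q/A - 1/A = (1 - q)/(q*A)" using A q by (simp add: field_simps)
  also have "1 - q = - S * A" using qd by simp
  also have "- S * A / (q * A) = - S / q" using A by (rule nonzero_mult_divide_mult_cancel_right)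
  finally show ?thesis by simp
qed

lemma perturb:
  fixes n :: nat and a b t x :: "nat \<Rightarrow> real" and K d T :: real
  assumes a: "\<forall>i\<in>{1..n}. a i > 0" and n2: "n \<ge> 2" and i: "i \<in> {1..n}"
    and X: "\<forall>j\<in>{1..n}. a j * x j + b j + t j = K" and sx: "(\<Sum>j\<in>{1..n}. x j) = 1"
    and T: "T = (\<Sum>j\<in>{1..n}. 1/a j)"
    and pos: "\<forall>j\<in>{1..n}. 0 < x j + d * (1/(a i * T)/a j - (if j = i then 1/a i else 0))"
  shows "eqflow n a b (t(i := t i + d)) i = x i - d / (a i + 1/(\<Sum>j\<in>{1..n}-{i}. 1/a j))"
proof -
  define S where "S = (\<Sum>j\<in>{1..n}-{i}. 1/a j)"
  have Spos: "S > 0" unfolding S_def using S_pos[OF a n2 i] .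
  have A: "a i > 0" using a i by blast
  have TS: "T = 1/a i + S" unfolding T S_def using T_split[OF i] .
  have "1/a i > 0" using A by simp
  then have Tpos: "T > 0" using TS Spos by linarith
  define D where "D = d / (a i * T)"
  define K' where "K' = K + D"
  define y where "y j = (if j \<in> {1..n} then x j + d * (1/(a i * T)/a j - (if j = i then 1/a i else 0)) else 0)" for j
  have yK: "y j = (K' - b j - (t(i:=t i + d)) j)/a j" if j: "j \<in> {1..n}" for j
  proof -
    have aj: "a j > 0" using a j by blast
    have "a j * x j + b j + t j = K" using X j by blast
    then have xj: "x j = (K - b j - t j)/a j" using aj by (simp add: field_simps)
    have ajn: "a j \<noteq> 0" and ain: "a i \<noteq> 0" and Tn: "T \<noteq> 0" using aj A Tpos by auto
    show ?thesis unfolding y_def xj K'_def D_def using j ajn ain Tn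
      by (cases "j = i") (simp_all add: field_simps)
  qed
  have wy: "wardrop n a b (t(i := t i + d)) y"
  proof (rule level_wardrop[OF a, of _ K'])
    show "\<forall>j\<in>{1..n}. y j = max 0 ((K' - b j - (t(i := t i + d)) j) / a j)"
    proof
      fix j assume j: "j \<in> {1..n}"
      have "y j > 0" using pos j unfolding y_def by simp
      thus "y j = max 0 ((K' - b j - (t(i := t i + d)) j) / a j)" using yK[OF j] by simp
    qed
    show "\<forall>j. j \<notin> {1..n} \<longrightarrow> y j = 0" unfolding y_def by simp
    have s1: "(\<Sum>j\<in>{1..n}. 1/(a i * T)/a j) = 1/(a i * T) * T"
      unfolding T by (simp add: sum_distrib_left divide_inverse)
    define k where "k j = 1/(a i * T)/a j - (if j = i then 1/a i else 0)" for j
    have e1: "(\<Sum>j\<in>{1..n}. y j) = (\<Sum>j\<in>{1..n}. x j + d * k j)"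
      by (rule sum.cong) (auto simp: y_def k_def)
    have e2: "(\<Sum>j\<in>{1..n}. x j + d * k j) = (\<Sum>j\<in>{1..n}. x j) + d * (\<Sum>j\<in>{1..n}. k j)"
      by (simp add: sum.distrib sum_distrib_left)
    have e3: "(\<Sum>j\<in>{1..n}. k j) = (\<Sum>j\<in>{1..n}. 1/(a i * T)/a j) - (\<Sum>j\<in>{1..n}. (if j = i then 1/a i else 0))"
      unfolding k_def by (rule sum_subtractf)
    have e4: "(\<Sum>j\<in>{1..n}. (if j = i then 1/a i else 0)) = 1/a i" using i by simp
    have e5: "1/(a i * T) * T - 1/a i = 0" using Tpos A by simp
    have "(\<Sum>j\<in>{1..n}. y j) = 1 + d * (1/(a i * T) * T - 1/a i)"
      using e1 e2 e3 e4 s1 sx by simp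
    then show "(\<Sum>j\<in>{1..n}. y j) = 1" using e5 by simp
  qed
  have "eqflow n a b (t(i := t i + d)) = y" by (rule eqflow_eq[OF a wy])
  then have "eqflow n a b (t(i := t i + d)) i = x i + d * (1/(a i * T)/a i - 1/a i)"
    using i unfolding y_def by simp
  also have "\<dots> = x i - d / (a i + 1/S)"
  proof -
    have AT: "a i * T = 1 + a i * S" using TS A by (simp add: field_simps)
    have p1: "1 + a i * S > 0" using A Spos by (simp add: add_pos_pos)
    have "1/(a i * T)/a i - 1/a i = - (S / (1 + a i * S))"
    proof -
      have "a i + S * (a i * a i) = a i * (1 + a i * S)" by (simp add: algebra_simps)
      then have p2: "a i + S * (a i * a i) > 0" using p1 A by simp
      show ?thesis unfolding AT using p1 A by (intro alg1) auto
    qed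
    moreover have "d / (a i + 1/S) = d * (S / (1 + a i * S))" using Spos by (simp add: field_simps)
    ultimately show ?thesis by simp
  qed
  finally show ?thesis unfolding S_def .
qed

lemma quad:
  fixes al x t t' c :: real
  assumes al: "al > 0" and t': "0 \<le> t'" "t' \<le> c" and t: "t = min (al * x) c"
  shows "t' * (x - (t' - t)/al) \<le> t * x"
proof -
  have e1: "t' * (x - (t' - t)/al) = t' * (al * x - t' + t) / al" using al by (simp add: field_simps)
  have e2: "t * x = t * (al * x) / al" using al by simp
  have "t' * (al * x - t' + t) \<le> t * (al * x)"
  proof (cases "al * x \<le> c")
    case True
    then have tt: "t = al * x" using t by simp
    have "t * (al * x) - t' * (al * x - t' + t) = (t - t')^2" unfolding tt by (simp add: power2_eq_square algebra_simps)
    moreover have "(t - t')^2 \<ge> 0" by simp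
    ultimately show ?thesis by linarith
  next
    case False
    then have tt: "t = c" using t by simp
    have "t * (al * x) - t' * (al * x - t' + t) = (t - t') * (al * x - t')" by (simp add: algebra_simps)
    moreover have "(t - t') * (al * x - t') \<ge> 0" using tt t' False by (intro mult_nonneg_nonneg) auto
    ultimately show ?thesis by linarith
  qed
  then have "t' * (al * x - t' + t) / al \<le> t * (al * x) / al" using al by (intro divide_right_mono) auto
  thus ?thesis using e1 e2 by simp
qed



theorem mainTheorem5:
  fixes n :: nat and a b t x :: "nat \<Rightarrow> real" and c :: real
  assumes "n \<ge> 2"
    and "\<forall>i\<in>{1..n}. a i > 0" and "\<forall>i\<in>{1..n}. b i \<ge> 0"
    and "\<forall>i\<in>{1..n}. eqflow n a b (\<lambda>_. 0) i > 0"
    and "c \<ge> 0"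
    and "\<forall>i\<in>{1..n}. t i \<ge> 0"
    and "is_flow n x"
  shows "(t \<in> capped_SPNE n a b c \<and> (\<forall>i\<in>{1..n}. x i = eqflow n a b t i)) \<longleftrightarrow>
    (\<exists>K::real.
       (\<forall>i\<in>{1..n}. a i * x i + b i + t i = K) \<and>
       (\<Sum>i\<in>{1..n}. x i) = 1 \<and>
       (\<forall>i\<in>{1..n}. t i = min ((a i + 1 / (\<Sum>j\<in>{1..n} - {i}. 1 / a j)) * x i) c) \<and>
       (\<forall>i\<in>{1..n}. x i > 0))"
proof -
  note n2 = assms(1) and a = assms(2) and E0p = assms(4) and c0 = assms(5) and t0 = assms(6)
  have n1: "n \<ge> 1" using n2 by simp
  have sx: "(\<Sum>i\<in>{1..n}. x i) = 1" using assms(7) by (simp add: is_flow_def)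
  define al where "al i = a i + 1 / (\<Sum>j\<in>{1..n} - {i}. 1 / a j)" for i
  have alpos: "al i > 0" if i: "i \<in> {1..n}" for i
  proof -
    have "(\<Sum>j\<in>{1..n} - {i}. 1 / a j) > 0" using S_pos[OF a n2 i] .
    then have "1 / (\<Sum>j\<in>{1..n} - {i}. 1 / a j) > 0" by simp
    moreover have "a i > 0" using a i by blast
    ultimately show ?thesis unfolding al_def by linarith
  qed
  show ?thesis
  proof
    assume L: "t \<in> capped_SPNE n a b c \<and> (\<forall>i\<in>{1..n}. x i = eqflow n a b t i)"
    then have tc: "\<forall>i\<in>{1..n}. 0 \<le> t i \<and> t i \<le> c"
      and opt: "\<forall>i\<in>{1..n}. \<forall>t'\<in>{0..c}. profit n a b t i \<ge> profit n a b (t(i := t')) i"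
      by (auto simp: capped_SPNE_def)
    define E where "E = eqflow n a b t"
    have wE: "wardrop n a b t E" unfolding E_def by (rule eqflow_wardrop[OF a n1])
    have xE: "\<forall>i\<in>{1..n}. x i = E i" using L E_def by simp
    have sE: "(\<Sum>i\<in>{1..n}. E i) = 1" using wE by (simp add: wardrop_def is_flow_def)
    obtain K where KE: "\<forall>i\<in>{1..n}. E i = max 0 ((K - b i - t i)/a i)"
      using wardrop_level[OF a wE] by blast
    define E0 where "E0 = eqflow n a b (\<lambda>_. 0)"
    have wE0: "wardrop n a b (\<lambda>_. 0) E0" unfolding E0_def by (rule eqflow_wardrop[OF a n1])
    have sE0: "(\<Sum>i\<in>{1..n}. E0 i) = 1" using wE0 by (simp add: wardrop_def is_flow_def)
    obtain K0 where KE0: "\<forall>i\<in>{1..n}. E0 i = max 0 ((K0 - b i - 0)/a i)"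
      using wardrop_level[OF a wE0] by blast
    have E0pos: "\<forall>i\<in>{1..n}. E0 i > 0" using E0p E0_def by simp
    have E0v: "E0 i = (K0 - b i)/a i" if i: "i \<in> {1..n}" for i
      using bspec[OF KE0 i] bspec[OF E0pos i] by (auto simp: max_def split: if_splits)
    have K0b: "b i < K0" if i: "i \<in> {1..n}" for i
    proof -
      have "E0 i > 0" using E0pos i by blast
      then have "(K0 - b i)/a i > 0" using E0v[OF i] by simp
      moreover have "a i > 0" using a i by blast
      ultimately show ?thesis by (simp add: zero_less_divide_iff)
    qed
    have KK0: "K0 \<le> K"
    proof (rule ccontr)
      assume "\<not> K0 \<le> K"
      then have lt: "K < K0" by simp
      have le: "\<forall>i\<in>{1..n}. E i \<le> E0 i"
      proof
        fix i assume i: "i \<in> {1..n}"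
        have ai: "a i > 0" using a i by blast
        have "(K - b i - t i)/a i \<le> (K0 - b i - 0)/a i"
          using lt bspec[OF tc i] ai by (intro divide_right_mono) auto
        then show "E i \<le> E0 i" using bspec[OF KE i] bspec[OF KE0 i] by (simp add: max_def)
      qed
      have one: "1 \<in> {1..n}" using n1 by simp
      have "E 1 = E0 1" using sum_eq_le[of "{1..n}" E E0] le sE sE0 one by auto
      then have "E 1 > 0" using bspec[OF E0pos one] by simp
      then have "E 1 = (K - b 1 - t 1)/a 1" using bspec[OF KE one] by (auto simp: max_def split: if_splits)
      moreover have "(K - b 1 - t 1)/a 1 < (K0 - b 1)/a 1"
      proof -
        have "a 1 > 0" using a one by blast
        moreover have "K - b 1 - t 1 < K0 - b 1" using lt bspec[OF tc one] by force
        ultimately show ?thesis by (intro divide_strict_right_mono)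
      qed
      ultimately show False using \<open>E 1 = E0 1\<close> E0v[OF one] by simp
    qed
    have Enn: "\<forall>i\<in>{1..n}. E i \<ge> 0" using KE by simp
    have Epos: "\<forall>i\<in>{1..n}. E i > 0"
    proof (rule ballI, rule ccontr)
      fix i assume i: "i \<in> {1..n}" and np: "\<not> E i > 0"
      have ai: "a i > 0" using a i by blast
      have Ei0: "E i = 0" using np bspec[OF Enn i] by force
      moreover have "(K - b i - t i)/a i \<le> max 0 ((K - b i - t i)/a i)" by simp
      ultimately have "(K - b i - t i)/a i \<le> 0" using bspec[OF KE i] by linarith
      then have "K - b i - t i \<le> 0" using ai by (simp add: divide_le_0_iff)
      moreover have "b i < K" using K0b[OF i] KK0 by simp
      ultimately have tipos: "t i > 0" by linarith
      define t' where "t' = min c ((K - b i)/2)"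
      have t'pos: "t' > 0" unfolding t'_def using tipos bspec[OF tc i] \<open>b i < K\<close> by auto
      have t'c: "t' \<le> c" unfolding t'_def by simp
      have "t' \<le> (K - b i)/2" unfolding t'_def by (rule min.cobounded2)
      then have t'lt: "t' < K - b i" using \<open>b i < K\<close> by (simp add: field_simps)
      define Y where "Y = eqflow n a b (t(i := t'))"
      have wY: "wardrop n a b (t(i := t')) Y" unfolding Y_def by (rule eqflow_wardrop[OF a n1])
      have sY: "(\<Sum>j\<in>{1..n}. Y j) = 1" using wY by (simp add: wardrop_def is_flow_def)
      obtain K' where KY: "\<forall>j\<in>{1..n}. Y j = max 0 ((K' - b j - (t(i := t')) j)/a j)"
        using wardrop_level[OF a wY] by blast
      have Yi: "Y i > 0"
      proof (rule ccontr)
        assume "\<not> Y i > 0"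
        then have "max 0 ((K' - b i - t')/a i) \<le> 0" using bspec[OF KY i] by simp
        then have "(K' - b i - t')/a i \<le> 0" by simp
        then have "K' - b i - t' \<le> 0" using ai by (simp add: divide_le_0_iff)
        then have K'K: "K' < K" using t'lt by linarith
        have le: "\<forall>j\<in>{1..n}. Y j \<le> E j"
        proof
          fix j assume j: "j \<in> {1..n}"
          have aj: "a j > 0" using a j by blast
          show "Y j \<le> E j"
          proof (cases "j = i")
            case True
            then show ?thesis using \<open>\<not> Y i > 0\<close> bspec[OF Enn j] by auto
          next
            case False
            have "(K' - b j - t j)/a j \<le> (K - b j - t j)/a j"
              using K'K aj by (intro divide_right_mono) auto
            then show ?thesis using bspec[OF KY j] bspec[OF KE j] False by (simp add: max_def)
          qed
        qed
        have eq: "\<forall>j\<in>{1..n}. Y j = E j" using sum_eq_le[of "{1..n}" Y E] le sY sE by auto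
        obtain j0 where j0: "j0 \<in> {1..n}" "E j0 > 0" using exists_pos[OF sE] by blast
        have j0i: "j0 \<noteq> i" using j0 Ei0 by auto
        have aj0: "a j0 > 0" using a j0 by blast
        have "E j0 = (K - b j0 - t j0)/a j0" using bspec[OF KE j0(1)] j0(2) by (auto simp: max_def split: if_splits)
        moreover have "Y j0 = (K' - b j0 - t j0)/a j0" using bspec[OF KY j0(1)] j0i bspec[OF eq j0(1)] j0(2) by (auto simp: max_def split: if_splits)
        moreover have "(K' - b j0 - t j0)/a j0 < (K - b j0 - t j0)/a j0"
          using K'K aj0 by (intro divide_strict_right_mono) auto
        ultimately show False using bspec[OF eq j0(1)] by linarith
      qed
      have "profit n a b (t(i := t')) i = t' * Y i" unfolding profit_def Y_def by simp
      moreover have "t' * Y i > 0" using t'pos Yi by simp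
      moreover have "profit n a b t i = 0" unfolding profit_def using Ei0 E_def by simp
      moreover have "profit n a b t i \<ge> profit n a b (t(i := t')) i"
        using opt i t'c t'pos by auto
      ultimately show False by linarith
    qed
    have cost: "\<forall>i\<in>{1..n}. a i * E i + b i + t i = K"
    proof
      fix i assume i: "i \<in> {1..n}"
      have ai: "a i > 0" using a i by blast
      have "E i = (K - b i - t i)/a i" using bspec[OF KE i] bspec[OF Epos i] by (auto simp: max_def split: if_splits)
      then show "a i * E i + b i + t i = K" using ai by (simp add: field_simps)
    qed
    have tmin: "t i = min (al i * x i) c" if i: "i \<in> {1..n}" for i
    proof -
      have ai: "a i > 0" using a i by blast
      have tic: "t i \<le> c" and ti0: "0 \<le> t i" using bspec[OF tc i] by auto
      have alp: "al i > 0" using alpos[OF i] .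
      define T where "T = (\<Sum>j\<in>{1..n}. 1/a j)"
      define k where "k j = 1/(a i * T)/a j - (if j = i then 1/a i else 0)" for j
      have ev: "eventually (\<lambda>d. \<forall>j\<in>{1..n}. 0 < E j + d * k j) (at (0::real) within s)" for s
        by (rule ev_pos) (use Epos in auto)
      have dev: "(t i + d) * (E i - d / al i) \<le> t i * E i"
        if p: "\<forall>j\<in>{1..n}. 0 < E j + d * k j" and d1: "0 \<le> t i + d" and d2: "t i + d \<le> c" for d
      proof -
        have "eqflow n a b (t(i := t i + d)) i = E i - d / al i"
          unfolding al_def
          by (rule perturb[OF a n2 i cost sE T_def]) (use p in \<open>simp add: k_def\<close>)
        then have "profit n a b (t(i := t i + d)) i = (t i + d) * (E i - d / al i)"
          unfolding profit_def by simp
        moreover have "profit n a b t i = t i * E i" unfolding profit_def E_def by simp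
        ultimately show ?thesis using opt i d1 d2 by force
      qed
      have expand: "(t i + d) * (E i - d / al i) = t i * E i + d * (E i - t i / al i - d / al i)" for d
        by (simp add: algebra_simps add_divide_distrib diff_divide_distrib)
      have le1: "t i \<le> al i * E i"
      proof (rule ccontr)
        assume "\<not> t i \<le> al i * E i"
        then have gt: "al i * E i < t i" by simp
        have "al i * E i > 0" using alp bspec[OF Epos i] by simp
        define dd where "dd = E i - t i / al i"
        have "t i / al i > E i" using gt alp by (simp add: field_simps)
        then have ddn: "dd < 0" unfolding dd_def by simp
        obtain b0 where b0: "b0 < 0" "\<forall>y>b0. y < 0 \<longrightarrow> (\<forall>j\<in>{1..n}. 0 < E j + y * k j)"
          using ev[of "{..<0}"] unfolding eventually_at_left_field by blast
        define d where "d = max b0 (max (- t i) (al i * dd)) / 2"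
        have "al i * dd < 0" using alp ddn by (simp add: mult_pos_neg)
        then have mx: "max b0 (max (- t i) (al i * dd)) < 0" using b0 \<open>al i * E i > 0\<close> gt by auto
        have dneg: "d < 0" unfolding d_def using mx by simp
        have db0: "d > b0" "d > - t i" "d > al i * dd" unfolding d_def using mx by auto
        have "(t i + d) * (E i - d / al i) \<le> t i * E i"
          using dev[of d] b0 db0 dneg tic by auto
        then have "d * (dd - d / al i) \<le> 0" using expand[of d] unfolding dd_def by simp
        moreover have "dd - d / al i < 0"
        proof -
          have "d / al i > dd" using db0(3) alp by (simp add: field_simps)
          thus ?thesis by simp
        qed
        ultimately show False using dneg by (simp add: mult_le_0_iff)
      qed
      have le2: "\<not> (t i < al i * E i \<and> t i < c)"
      proof
        assume h: "t i < al i * E i \<and> t i < c"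
        define dd where "dd = E i - t i / al i"
        have "t i / al i < E i" using h alp by (simp add: field_simps)
        then have ddp: "dd > 0" unfolding dd_def by simp
        obtain b0 where b0: "b0 > 0" "\<forall>y>0. y < b0 \<longrightarrow> (\<forall>j\<in>{1..n}. 0 < E j + y * k j)"
          using ev[of "{0<..}"] unfolding eventually_at_right_field by blast
        define d where "d = min b0 (min (c - t i) (al i * dd)) / 2"
        have "al i * dd > 0" using alp ddp by simp
        then have mn: "min b0 (min (c - t i) (al i * dd)) > 0" using b0 h by auto
        have dpos: "d > 0" unfolding d_def using mn by simp
        have db0: "d < b0" "d < c - t i" "d < al i * dd" unfolding d_def using mn by auto
        have "(t i + d) * (E i - d / al i) \<le> t i * E i"
          using dev[of d] b0 db0 dpos ti0 by auto
        then have "d * (dd - d / al i) \<le> 0" using expand[of d] unfolding dd_def by simp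
        moreover have "dd - d / al i > 0"
        proof -
          have "d / al i < dd" using db0(3) alp by (simp add: field_simps)
          thus ?thesis by simp
        qed
        ultimately show False using dpos by (simp add: mult_le_0_iff)
      qed
      show ?thesis using le1 le2 tic xE i by (auto simp: min_def)
    qed
    show "\<exists>K::real.
       (\<forall>i\<in>{1..n}. a i * x i + b i + t i = K) \<and>
       (\<Sum>i\<in>{1..n}. x i) = 1 \<and>
       (\<forall>i\<in>{1..n}. t i = min ((a i + 1 / (\<Sum>j\<in>{1..n} - {i}. 1 / a j)) * x i) c) \<and>
       (\<forall>i\<in>{1..n}. x i > 0)"
      using cost xE sx tmin Epos unfolding al_def by (intro exI[of _ K]) auto
  next
    assume "\<exists>K::real.
       (\<forall>i\<in>{1..n}. a i * x i + b i + t i = K) \<and>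
       (\<Sum>i\<in>{1..n}. x i) = 1 \<and>
       (\<forall>i\<in>{1..n}. t i = min ((a i + 1 / (\<Sum>j\<in>{1..n} - {i}. 1 / a j)) * x i) c) \<and>
       (\<forall>i\<in>{1..n}. x i > 0)"
    then obtain K where cost: "\<forall>i\<in>{1..n}. a i * x i + b i + t i = K"
      and tmin: "\<forall>i\<in>{1..n}. t i = min (al i * x i) c"
      and xpos: "\<forall>i\<in>{1..n}. x i > 0" unfolding al_def by blast
    define X where "X j = (if j \<in> {1..n} then x j else 0)" for j
    have wX: "wardrop n a b t X"
    proof (rule level_wardrop[OF a, of _ K])
      show "\<forall>i\<in>{1..n}. X i = max 0 ((K - b i - t i) / a i)"
      proof
        fix i assume i: "i \<in> {1..n}"
        have ai: "a i > 0" using a i by blast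
        have "x i = (K - b i - t i)/a i" using cost i ai by (auto simp: field_simps)
        then show "X i = max 0 ((K - b i - t i) / a i)" using bspec[OF xpos i] i unfolding X_def by simp
      qed
      show "\<forall>i. i \<notin> {1..n} \<longrightarrow> X i = 0" unfolding X_def by simp
      show "(\<Sum>i\<in>{1..n}. X i) = 1" using sx unfolding X_def by simp
    qed
    have eqX: "eqflow n a b t = X" by (rule eqflow_eq[OF a wX])
    have xeq: "\<forall>i\<in>{1..n}. x i = eqflow n a b t i" using eqX unfolding X_def by simp
    have bounds: "\<forall>i\<in>{1..n}. 0 \<le> t i \<and> t i \<le> c" using t0 tmin by auto
    have optim: "profit n a b t i \<ge> profit n a b (t(i := t')) i"
      if i: "i \<in> {1..n}" and t': "t' \<in> {0..c}" for i t'
    proof -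
      define Y where "Y = eqflow n a b (t(i := t'))"
      have wY: "wardrop n a b (t(i := t')) Y" unfolding Y_def by (rule eqflow_wardrop[OF a n1])
      have Ynn: "Y i \<ge> 0" using wY i by (simp add: wardrop_def is_flow_def)
      have p1: "profit n a b t i = t i * x i" unfolding profit_def using xeq i by simp
      have p2: "profit n a b (t(i := t')) i = t' * Y i" unfolding profit_def Y_def by simp
      show ?thesis
      proof (cases "Y i > 0")
        case False
        then have "Y i = 0" using Ynn by simp
        moreover have "t i * x i \<ge> 0" using bspec[OF t0 i] bspec[OF xpos i] by simp
        ultimately show ?thesis using p1 p2 by simp
      next
        case True
        have "Y i \<le> x i - (t' - t i) / al i"
          unfolding al_def by (rule tangent[OF a n2 i cost sx wY True])
        then have "t' * Y i \<le> t' * (x i - (t' - t i) / al i)" using t' by (intro mult_left_mono) auto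
        also have "\<dots> \<le> t i * x i" using quad[OF alpos[OF i], of t' c "t i" "x i"] t' tmin i by auto
        finally show ?thesis using p1 p2 by simp
      qed
    qed
    have "t \<in> capped_SPNE n a b c" unfolding capped_SPNE_def using bounds optim by blast
    then show "t \<in> capped_SPNE n a b c \<and> (\<forall>i\<in>{1..n}. x i = eqflow n a b t i)" using xeq by blast
  qed
qed


end
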